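(* Fix $v\in[n]$. Let $G$ be a random variable with $\mathbb P(G\ge k)=2^{-k}$ for $k\in\{0,1,2,\dots\}$, independent of $\mathcal S_n(v)$, and let $D=\min\{G,|\mathcal S_n(v)|\}$. Then $d_n(v)\stackrel{\mathcal L}{=}D$, and for all $k,l\in\mathbb N$, \[\mathbb P(d_n(v)\ge k,\ h_n(v)\le l)=2^{-k}\,\mathbb P\big(\mathrm{Bin}(|\mathcal S_n(v)|-k,1/2)\le l,\ |\mathcal S_n(v)|\ge k\big),\] where, conditionally on $|\mathcal S_n(v)|$, the binomial variable has $|\mathcal S_n(v)|-k$ trials with success probability $1/2$.
   Context: Kingman's $n$-coalescent $(F_n,\dots,F_1)$: forests on $[n]$, rooted trees with edges directed towards roots; $F_n$ has no edges; for $2\le i\le n$, list the trees of $F_i$ as $T^{(i)}_1,\dots,T^{(i)}_i$ in increasing order of smallest label, choose $\{a_i,b_i\}$ uniformly among 2-subsets of $[i]$ and an independent fair bit $\xi_i$ (all independent over $i$), and obtain $F_{i-1}$ by adding an edge between the roots of $T^{(i)}_{a_i},T^{(i)}_{b_i}$ directed towards the root of $T^{(i)}_{\min(a_i,b_i)}$ if $\xi_i=1$, towards the other root otherwise (the head becomes the root of the merged tree). $T^{(n)}$ is the unique tree of $F_1$; $d_n(v)$ and $h_n(v)$ are the number of children and the depth of $v$ in $T^{(n)}$. For $v\in[n]$ and $1\le i\le n$, $T_i(v)$ is the tree of $F_i$ containing $v$. The selection set is $\mathcal S_n(v)=\{2\le i\le n: T_i(v)\in\{T^{(i)}_{a_i},T^{(i)}_{b_i}\}\}$.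 *)

theory Defs
  imports "HOL-Probability.Probability"
begin

text \<open>A forest on [n] is encoded by (i) the list of its trees, each tree given as
  (root, vertex set), listed in increasing order of smallest label, and (ii) its edge set,
  a set of pairs (child, parent), i.e. edges directed towards the root.\<close>

type_synonym forest = "(nat \<times> nat set) list \<times> (nat \<times> nat) set"

text \<open>Random choice at step i: (a, b, xi) with 1 \<le> a < b \<le> i encoding the 2-subset {a,b}.\<close>
type_synonym choice = "nat \<times> nat \<times> bool"

definition init_forest :: "nat \<Rightarrow> forest" where
  "init_forest n = (map (\<lambda>j. (j, {j})) [1..<Suc n], {})"

text \<open>Merge trees number a and b (1-indexed, a < b); if xi, the edge points towards the root
  of tree number min(a,b) = a, otherwise towards the root of tree b.\<close>
definition merge_step :: "choice \<Rightarrow> forest \<Rightarrow> forest" where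
  "merge_step c F = (case c of (a, b, xi) \<Rightarrow>
     let ts = fst F; E = snd F;
         (ra, Va) = ts ! (a - 1); (rb, Vb) = ts ! (b - 1);
         hd_r = (if xi then ra else rb); tl_r = (if xi then rb else ra);
         others = map snd (filter (\<lambda>(j, t). j \<noteq> a - 1 \<and> j \<noteq> b - 1) (List.enumerate 0 ts))
     in (sort_key (\<lambda>(r, V). Min V) ((hd_r, Va \<union> Vb) # others), insert (tl_r, hd_r) E))"

text \<open>coal_aux w n m = F_{n-m}: the forest after the merges at steps n, n-1, ..., n-m+1.\<close>
fun coal_aux :: "(nat \<Rightarrow> choice) \<Rightarrow> nat \<Rightarrow> nat \<Rightarrow> forest" where
  "coal_aux w n 0 = init_forest n"
| "coal_aux w n (Suc m) = merge_step (w (n - m)) (coal_aux w n m)"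

definition coal :: "(nat \<Rightarrow> choice) \<Rightarrow> nat \<Rightarrow> nat \<Rightarrow> forest" where
  "coal w n i = coal_aux w n (n - i)"

definition choice_pmf :: "nat \<Rightarrow> choice pmf" where
  "choice_pmf i = pmf_of_set {(a, b, xi). 1 \<le> a \<and> a < b \<and> b \<le> i}"

definition kingman_pmf :: "nat \<Rightarrow> (nat \<Rightarrow> choice) pmf" where
  "kingman_pmf n = Pi_pmf {2..n} (0, 0, False) choice_pmf"

text \<open>T^{(n)} is the unique tree of F_1; d_n(v) = number of children, h_n(v) = depth
  (number of proper ancestors, i.e. the length of the path from v to the root).\<close>
definition dn :: "(nat \<Rightarrow> choice) \<Rightarrow> nat \<Rightarrow> nat \<Rightarrow> nat" where
  "dn w n v = card {u. (u, v) \<in> snd (coal w n 1)}"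

definition hn :: "(nat \<Rightarrow> choice) \<Rightarrow> nat \<Rightarrow> nat \<Rightarrow> nat" where
  "hn w n v = card {u. (v, u) \<in> (snd (coal w n 1))\<^sup>+}"

definition sel :: "(nat \<Rightarrow> choice) \<Rightarrow> nat \<Rightarrow> nat \<Rightarrow> nat set" where
  "sel w n v = {i \<in> {2..n}. case w i of (a, b, xi) \<Rightarrow>
      v \<in> snd (fst (coal w n i) ! (a - 1)) \<or> v \<in> snd (fst (coal w n i) ! (b - 1))}"

end

theory Submission
  imports Defs
begin

lemma measure_bind_pmf': "measure_pmf.prob (bind_pmf M N) X = measure_pmf.expectation M (\<lambda>x. measure_pmf.prob (N x) X)"
proof -
  have "ennreal (measure_pmf.prob (bind_pmf M N) X) = emeasure (bind_pmf M N) X"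
    by (rule measure_pmf.emeasure_eq_measure[symmetric])
  also have "\<dots> = (\<integral>\<^sup>+x. ennreal (measure_pmf.prob (N x) X) \<partial>M)"
    by (subst emeasure_bind_pmf) (simp add: measure_pmf.emeasure_eq_measure)
  also have "\<dots> = ennreal (measure_pmf.expectation M (\<lambda>x. measure_pmf.prob (N x) X))"
    by (rule nn_integral_eq_integral) (auto intro!: measure_pmf.integrable_const_bound[where B=1])
  finally show ?thesis
    by (subst (asm) ennreal_inj) (auto intro!: integral_nonneg_AE)
qed

lemma map_Not_bern: "map_pmf Not (bernoulli_pmf (1/2)) = bernoulli_pmf (1/2)"
proof (rule pmf_eqI)
  fix i
  have "Not -` {i} = {\<not> i}" by auto
  thus "pmf (map_pmf Not (bernoulli_pmf (1/2))) i = pmf (bernoulli_pmf (1/2)) i"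
    by (simp add: pmf_map measure_pmf_single)
qed

definition stepDH :: "bool \<Rightarrow> nat \<times> nat \<Rightarrow> nat \<times> nat" where
  "stepDH b dh = (if b then (Suc (fst dh), snd dh) else (0, Suc (snd dh)))"

fun mu :: "nat \<Rightarrow> (nat \<times> nat) pmf" where
  "mu 0 = return_pmf (0, 0)"
| "mu (Suc c) = bind_pmf (bernoulli_pmf (1/2)) (\<lambda>b. map_pmf (stepDH b) (mu c))"

lemma mu_fst: "map_pmf fst (mu c) = map_pmf (\<lambda>g. min g c) (geometric_pmf (1/2))"
proof (induction c)
  case 0
  then show ?case by (simp add: pmf.map_comp o_def map_pmf_const)
next
  case (Suc c)
  have "map_pmf fst (mu (Suc c)) = bind_pmf (bernoulli_pmf (1/2))
      (\<lambda>b. if b then map_pmf Suc (map_pmf fst (mu c)) else return_pmf 0)"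
    by (auto simp: map_bind_pmf pmf.map_comp o_def stepDH_def map_pmf_const intro!: bind_pmf_cong)
  also have "\<dots> = bind_pmf (bernoulli_pmf (1/2))
      (\<lambda>b. if b then map_pmf (\<lambda>g. Suc (min g c)) (geometric_pmf (1/2)) else return_pmf 0)"
    by (simp only: Suc.IH pmf.map_comp o_def)
  also have "\<dots> = bind_pmf (map_pmf Not (bernoulli_pmf (1/2)))
      (\<lambda>b. if b then return_pmf 0 else map_pmf (\<lambda>g. Suc (min g c)) (geometric_pmf (1/2)))"
    unfolding bind_map_pmf by (intro bind_pmf_cong) auto
  also have "\<dots> = bind_pmf (bernoulli_pmf (1/2))
      (\<lambda>b. if b then return_pmf 0 else map_pmf (\<lambda>g. Suc (min g c)) (geometric_pmf (1/2)))"
    by (simp only: map_Not_bern)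
  also have "\<dots> = map_pmf (\<lambda>g. min g (Suc c)) (geometric_pmf (1/2))"
    apply (subst (2) geometric_bind_pmf_unfold)
     apply simp
    apply (auto simp: map_bind_pmf pmf.map_comp o_def intro!: bind_pmf_cong)
    done
  finally show ?case .
qed

lemma mu_snd: "map_pmf snd (mu c) = binomial_pmf c (1/2)"
proof (induction c)
  case 0
  then show ?case by (simp add: binomial_pmf_0)
next
  case (Suc c)
  have "map_pmf snd (mu (Suc c)) = bind_pmf (bernoulli_pmf (1/2))
      (\<lambda>b. map_pmf (\<lambda>k. (if b then 0 else 1) + k) (map_pmf snd (mu c)))"
    by (auto simp: map_bind_pmf pmf.map_comp o_def stepDH_def intro!: bind_pmf_cong)
  also have "\<dots> = bind_pmf (map_pmf Not (bernoulli_pmf (1/2)))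
      (\<lambda>b. map_pmf (\<lambda>k. (if b then 1 else 0) + k) (binomial_pmf c (1/2)))"
    unfolding Suc.IH bind_map_pmf by (intro bind_pmf_cong) auto
  also have "map_pmf Not (bernoulli_pmf (1/2)) = bernoulli_pmf (1/2)"
    by (rule map_Not_bern)
  finally show ?case
    by (simp add: binomial_pmf_Suc map_pmf_def)
qed

lemma mu_prob: "measure_pmf.prob (mu c) {dh. fst dh \<ge> k \<and> snd dh \<le> l}
   = (1/2)^k * (if k \<le> c then measure_pmf.prob (binomial_pmf (c - k) (1/2)) {..l} else 0)"
proof (induction k arbitrary: c)
  case 0
  have "measure_pmf.prob (mu c) {dh. fst dh \<ge> 0 \<and> snd dh \<le> l}
       = measure_pmf.prob (map_pmf snd (mu c)) {..l}"
    by (simp add: vimage_def)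
  then show ?case by (simp add: mu_snd)
next
  case (Suc k)
  show ?case
  proof (cases c)
    case 0
    then show ?thesis by simp
  next
    case (Suc c')
    have "measure_pmf.prob (mu c) {dh. fst dh \<ge> Suc k \<and> snd dh \<le> l}
        = measure_pmf.expectation (bernoulli_pmf (1/2))
            (\<lambda>b. measure_pmf.prob (mu c') (stepDH b -` {dh. fst dh \<ge> Suc k \<and> snd dh \<le> l}))"
      by (simp add: Suc measure_bind_pmf')
    also have "\<dots> = (1/2) * measure_pmf.prob (mu c') {dh. fst dh \<ge> k \<and> snd dh \<le> l}"
      by (simp add: stepDH_def vimage_def)
    also have "\<dots> = (1/2)^(Suc k) * (if k \<le> c' then measure_pmf.prob (binomial_pmf (c' - k) (1/2)) {..l} else 0)"
      by (simp add: Suc.IH)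
    finally show ?thesis by (simp add: Suc)
  qed
qed

definition DH :: "nat set \<Rightarrow> (nat \<Rightarrow> bool) \<Rightarrow> nat \<times> nat" where
  "DH S win = (card {i\<in>S. \<forall>j\<in>S. i \<le> j \<longrightarrow> win j}, card {i\<in>S. \<not> win i})"

lemma DH_cong: "(\<And>i. i \<in> S \<Longrightarrow> win i = win' i) \<Longrightarrow> DH S win = DH S win'"
  unfolding DH_def by (intro arg_cong2[where f=Pair] arg_cong[where f=card]) auto

lemma DH_insert:
  assumes "finite S" "\<forall>a\<in>S. a < m"
  shows "DH (insert m S) win = stepDH (win m) (DH S win)"
proof (cases "win m")
  case True
  have 1: "{i\<in>insert m S. \<forall>j\<in>insert m S. i \<le> j \<longrightarrow> win j} = insert m {i\<in>S. \<forall>j\<in>S. i \<le> j \<longrightarrow> win j}"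
    using assms True by auto
  have 2: "{i\<in>insert m S. \<not> win i} = {i\<in>S. \<not> win i}" using True by auto
  have "m \<notin> S" using assms by auto
  then show ?thesis unfolding DH_def stepDH_def 1 2 using True assms by simp
next
  case False
  have 1: "{i\<in>insert m S. \<forall>j\<in>insert m S. i \<le> j \<longrightarrow> win j} = {}"
    using assms False by (auto simp: less_imp_le)
  have 2: "{i\<in>insert m S. \<not> win i} = insert m {i\<in>S. \<not> win i}" using False by auto
  have "m \<notin> S" using assms by auto
  then show ?thesis unfolding DH_def stepDH_def 1 2 using False assms by simp
qed

lemma map_pair_pmf_bind: "map_pmf h (pair_pmf A B) = bind_pmf A (\<lambda>y. map_pmf (\<lambda>f. h (y, f)) B)"
  by (simp add: pair_pmf_def map_bind_pmf map_pmf_def bind_assoc_pmf bind_return_pmf)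

lemma core_S:
  assumes "finite S" "\<And>i. i \<in> S \<Longrightarrow> map_pmf (g i) (q i) = bernoulli_pmf (1/2)"
  shows "map_pmf (\<lambda>w. DH S (\<lambda>i. g i (w i))) (Pi_pmf S d q) = mu (card S)"
  using assms
proof (induction S rule: finite_linorder_max_induct)
  case empty
  then show ?case by (simp add: DH_def)
next
  case (insert m S)
  have mS: "m \<notin> S" using insert by auto
  have "map_pmf (\<lambda>w. DH (insert m S) (\<lambda>i. g i (w i))) (Pi_pmf (insert m S) d q)
      = map_pmf (\<lambda>(y, f). stepDH (g m y) (DH S (\<lambda>i. g i (f i)))) (pair_pmf (q m) (Pi_pmf S d q))"
    unfolding Pi_pmf_insert[OF insert(1) mS] pmf.map_comp
    apply (intro map_pmf_cong refl)
    apply (clarsimp simp: DH_insert insert(1,2))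
    apply (intro arg_cong[where f="stepDH _"] DH_cong)
    using mS by auto
  also have "\<dots> = bind_pmf (q m) (\<lambda>y. map_pmf (stepDH (g m y)) (map_pmf (\<lambda>f. DH S (\<lambda>i. g i (f i))) (Pi_pmf S d q)))"
    by (simp add: map_pair_pmf_bind pmf.map_comp o_def)
  also have "\<dots> = bind_pmf (q m) (\<lambda>y. map_pmf (stepDH (g m y)) (mu (card S)))"
    using insert by simp
  also have "\<dots> = bind_pmf (map_pmf (g m) (q m)) (\<lambda>b. map_pmf (stepDH b) (mu (card S)))"
    by (simp add: bind_map_pmf)
  also have "\<dots> = mu (card (insert m S))"
    using insert mS by simp
  finally show ?case .
qed

lemma core_A:
  assumes "finite A" "S \<subseteq> A" "\<And>i. i \<in> S \<Longrightarrow> map_pmf (g i) (q i) = bernoulli_pmf (1/2)"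
  shows "map_pmf (\<lambda>w. DH S (\<lambda>i. g i (w i))) (Pi_pmf A d q) = mu (card S)"
proof -
  have fS: "finite S" using assms finite_subset by blast
  have "map_pmf (\<lambda>w. DH S (\<lambda>i. g i (w i))) (Pi_pmf A d q)
     = map_pmf (\<lambda>w. DH S (\<lambda>i. g i (w i))) (map_pmf (\<lambda>f x. if x \<in> S then f x else d) (Pi_pmf A d q))"
    unfolding pmf.map_comp o_def by (intro map_pmf_cong refl DH_cong) auto
  also have "\<dots> = map_pmf (\<lambda>w. DH S (\<lambda>i. g i (w i))) (Pi_pmf S d q)"
    by (simp only: Pi_pmf_subset[OF assms(1,2), symmetric])
  also have "\<dots> = mu (card S)" by (rule core_S[OF fS assms(3)])
  finally show ?thesis .
qed

lemma filter_enum_gen: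
  "map snd (filter (\<lambda>(j, t). P j) (List.enumerate k ts)) =
   map fst (filter (\<lambda>p. P (snd p)) (zip ts [k..<k + length ts]))"
proof (induction ts arbitrary: k)
  case Nil then show ?case by simp
next
  case (Cons x ts)
  have "[k..<k + length (x # ts)] = k # [Suc k..<Suc k + length ts]"
    by (simp add: upt_rec)
  then show ?case using Cons[of "Suc k"] by simp
qed

lemma filter_enum_nths:
  "map snd (filter (\<lambda>(j, t). j \<noteq> a \<and> j \<noteq> b) (List.enumerate 0 ts)) = nths ts {j. j \<noteq> a \<and> j \<noteq> b}"
  unfolding filter_enum_gen nths_def by simp

lemma merge_step_eq:
  assumes "ts ! (a - 1) = (ra, Va)" "ts ! (b - 1) = (rb, Vb)"
  shows "merge_step (a, b, xi) (ts, E) =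
    (sort_key (\<lambda>(r, V). Min V) ((if xi then ra else rb, Va \<union> Vb) # nths ts {j. j \<noteq> a - 1 \<and> j \<noteq> b - 1}),
     insert (if xi then rb else ra, if xi then ra else rb) E)"
  using assms by (simp add: merge_step_def Let_def filter_enum_nths)

definition Inv :: "nat \<Rightarrow> nat \<Rightarrow> forest \<Rightarrow> bool" where
 "Inv v i F \<longleftrightarrow> length (fst F) = i \<and> distinct (fst F) \<and> finite (snd F) \<and>
   (\<forall>t\<in>set (fst F). fst t \<in> snd t) \<and>
   (\<forall>t1\<in>set (fst F). \<forall>t2\<in>set (fst F). t1 \<noteq> t2 \<longrightarrow> snd t1 \<inter> snd t2 = {}) \<and>
   (\<exists>t\<in>set (fst F). v \<in> snd t) \<and>
   (\<forall>e\<in>snd F. \<exists>t\<in>set (fst F). fst e \<in> snd t \<and> snd e \<in> snd t \<and> fst e \<noteq> fst t) \<and>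
   (\<forall>t\<in>set (fst F). \<forall>x\<in>snd t. (x, fst t) \<in> (snd F)\<^sup>*)"

definition dc :: "nat \<Rightarrow> forest \<Rightarrow> nat" where "dc v F = card {u. (u, v) \<in> snd F}"
definition hc :: "nat \<Rightarrow> forest \<Rightarrow> nat" where "hc v F = card {u. (v, u) \<in> (snd F)\<^sup>+}"
definition isr :: "nat \<Rightarrow> forest \<Rightarrow> bool" where "isr v F \<longleftrightarrow> (\<exists>V. (v, V) \<in> set (fst F))"

lemma Inv_len: "Inv v i (ts, E) \<Longrightarrow> length ts = i" by (simp add: Inv_def)
lemma Inv_dist: "Inv v i (ts, E) \<Longrightarrow> distinct ts" by (simp add: Inv_def)
lemma Inv_root: "Inv v i (ts, E) \<Longrightarrow> (r, V) \<in> set ts \<Longrightarrow> r \<in> V" by (auto simp: Inv_def)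
lemma Inv_disj: "Inv v i (ts, E) \<Longrightarrow> t1 \<in> set ts \<Longrightarrow> t2 \<in> set ts \<Longrightarrow> t1 \<noteq> t2 \<Longrightarrow> snd t1 \<inter> snd t2 = {}"
  by (simp add: Inv_def)

lemma tree_unique:
  assumes "Inv v i (ts, E)" "t1 \<in> set ts" "t2 \<in> set ts" "x \<in> snd t1" "x \<in> snd t2"
  shows "t1 = t2"
  using assms unfolding Inv_def by auto

lemma root_no_out:
  assumes "Inv v i (ts, E)" "t \<in> set ts"
  shows "(fst t, y) \<notin> E"
proof
  assume "(fst t, y) \<in> E"
  then obtain t' where "t' \<in> set ts" "fst t \<in> snd t'" "fst t \<noteq> fst t'"
    using assms unfolding Inv_def by fastforce
  moreover have "fst t \<in> snd t" using assms unfolding Inv_def by auto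
  ultimately show False using tree_unique[OF assms(1) assms(2) \<open>t' \<in> set ts\<close>] by auto
qed

lemma root_rtrancl:
  assumes "Inv v i (ts, E)" "t \<in> set ts" "(fst t, u) \<in> E\<^sup>*"
  shows "u = fst t"
  using assms(3) by (cases rule: converse_rtranclE) (use root_no_out[OF assms(1,2)] in auto)

lemma stay_tree:
  assumes "Inv v i (ts, E)" "t \<in> set ts" "(x, y) \<in> E\<^sup>*" "x \<in> snd t"
  shows "y \<in> snd t"
  using assms(3,4)
proof (induction rule: rtrancl_induct)
  case base then show ?case .
next
  case (step y z)
  then have "y \<in> snd t" by simp
  obtain t' where "t' \<in> set ts" "y \<in> snd t'" "z \<in> snd t'"
    using assms(1) step(2) unfolding Inv_def by fastforce
  then show ?case using tree_unique[OF assms(1) assms(2) \<open>t' \<in> set ts\<close> \<open>y \<in> snd t\<close>] by simp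
qed

lemma merge_props:
  fixes xi :: bool
  assumes inv: "Inv v i (ts, E)" and ab: "1 \<le> a" "a < b" "b \<le> i"
    and ta: "ts ! (a - 1) = (ra, Va)" and tb: "ts ! (b - 1) = (rb, Vb)"
  defines "h \<equiv> if xi then ra else rb" and "l \<equiv> if xi then rb else ra"
    and "Vl \<equiv> if xi then Vb else Va"
  shows "Inv v (i - 1) (merge_step (a, b, xi) (ts, E))"
    and "dc v (merge_step (a, b, xi) (ts, E)) = dc v (ts, E) + (if h = v then 1 else 0)"
    and "hc v (merge_step (a, b, xi) (ts, E)) = hc v (ts, E) + (if v \<in> Vl then 1 else 0)"
    and "isr v (merge_step (a, b, xi) (ts, E)) \<longleftrightarrow> h = v \<or> (isr v (ts, E) \<and> v \<notin> Va \<union> Vb)"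
proof -
  define I where "I = {j. j \<noteq> a - 1 \<and> j \<noteq> b - 1}"
  define others where "others = nths ts I"
  define T where "T = set ts"
  have len: "length ts = i" using inv by (simp add: Inv_def)
  have dist: "distinct ts" using inv by (simp add: Inv_def)
  have fE: "finite E" using inv by (simp add: Inv_def)
  have roots: "\<And>t. t \<in> T \<Longrightarrow> fst t \<in> snd t" using inv by (simp add: Inv_def T_def)
  have disjT: "\<And>t1 t2. t1 \<in> T \<Longrightarrow> t2 \<in> T \<Longrightarrow> t1 \<noteq> t2 \<Longrightarrow> snd t1 \<inter> snd t2 = {}"
    using inv by (simp add: Inv_def T_def)
  have vin: "\<exists>t\<in>T. v \<in> snd t" using inv by (simp add: Inv_def T_def)
  have edges: "\<And>e. e \<in> E \<Longrightarrow> \<exists>t\<in>T. fst e \<in> snd t \<and> snd e \<in> snd t \<and> fst e \<noteq> fst t"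
    using inv by (simp add: Inv_def T_def)
  have reach: "\<And>t x. t \<in> T \<Longrightarrow> x \<in> snd t \<Longrightarrow> (x, fst t) \<in> E\<^sup>*"
    using inv by (simp add: Inv_def T_def)
  have ai: "a - 1 < i" "b - 1 < i" "a - 1 \<noteq> b - 1" using ab by auto
  have "ts ! (a - 1) \<in> set ts" "ts ! (b - 1) \<in> set ts" using ai len by simp_all
  then have taT: "(ra, Va) \<in> T" and tbT: "(rb, Vb) \<in> T" using ta tb T_def by simp_all
  have neq: "(ra, Va) \<noteq> (rb, Vb)"
    using ta tb ai len nth_eq_iff_index_eq[OF dist, of "a - 1" "b - 1"] by auto
  have disj: "Va \<inter> Vb = {}" using disjT[OF taT tbT neq] by simp
  have raV: "ra \<in> Va" and rbV: "rb \<in> Vb" using roots[OF taT] roots[OF tbT] by auto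
  have rab: "ra \<noteq> rb" using raV rbV disj by auto
  have set_others: "set others = T - {(ra, Va), (rb, Vb)}"
  proof
    show "set others \<subseteq> T - {(ra, Va), (rb, Vb)}"
    proof
      fix x assume "x \<in> set others"
      then obtain j where j: "x = ts ! j" "j < i" "j \<in> I"
        unfolding others_def set_nths len by auto
      have "j \<noteq> a - 1" "j \<noteq> b - 1" using j I_def by auto
      then have "x \<noteq> (ra, Va)" "x \<noteq> (rb, Vb)" using j ta tb ai len nth_eq_iff_index_eq[OF dist, of j "a - 1"] nth_eq_iff_index_eq[OF dist, of j "b - 1"] by auto
      moreover have "x \<in> T" using j len T_def by auto
      ultimately show "x \<in> T - {(ra, Va), (rb, Vb)}" by auto
    qed
  next
    show "T - {(ra, Va), (rb, Vb)} \<subseteq> set others"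
    proof
      fix x assume x: "x \<in> T - {(ra, Va), (rb, Vb)}"
      then obtain j where j: "j < i" "x = ts ! j" using len T_def by (auto simp: in_set_conv_nth)
      have "j \<in> I" using j x ta tb I_def by auto
      then show "x \<in> set others" unfolding others_def set_nths using j len by auto
    qed
  qed
  have len_others: "length others = i - 2"
  proof -
    have "{j. j < length ts \<and> j \<in> I} = {..<i} - {a - 1, b - 1}" using len I_def by auto
    then show ?thesis unfolding others_def length_nths using ai by simp
  qed
  define new where "new = (h, Va \<union> Vb)"
  have hV: "h \<in> Va \<union> Vb" and lV: "l \<in> Va \<union> Vb" using raV rbV h_def l_def by auto
  have hl: "h \<noteq> l" using rab h_def l_def by auto
  have other_disj: "\<And>t. t \<in> set others \<Longrightarrow> snd t \<inter> (Va \<union> Vb) = {}"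
  proof -
    fix t assume "t \<in> set others"
    then have t: "t \<in> T" "t \<noteq> (ra, Va)" "t \<noteq> (rb, Vb)" using set_others by auto
    have "snd t \<inter> Va = {}" using disjT[OF t(1) taT t(2)] by simp
    moreover have "snd t \<inter> Vb = {}" using disjT[OF t(1) tbT t(3)] by simp
    ultimately show "snd t \<inter> (Va \<union> Vb) = {}" by (simp add: Int_Un_distrib)
  qed
  have new_notin: "new \<notin> set others"
  proof
    assume "new \<in> set others"
    then have "snd new \<inter> (Va \<union> Vb) = {}" by (rule other_disj)
    then show False using raV new_def by auto
  qed
  have ms: "merge_step (a, b, xi) (ts, E) = (sort_key (\<lambda>(r, V). Min V) (new # others), insert (l, h) E)"
    unfolding merge_step_eq[OF ta tb] new_def others_def I_def h_def l_def by simp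
  have setT': "set (fst (merge_step (a, b, xi) (ts, E))) = insert new (T - {(ra, Va), (rb, Vb)})"
    using ms set_others by (simp add: set_insort_key)
  have E': "snd (merge_step (a, b, xi) (ts, E)) = insert (l, h) E" using ms by simp
  have Esub: "E\<^sup>* \<subseteq> (insert (l, h) E)\<^sup>*" by (rule rtrancl_mono) auto
  have tl: "(l, Vl) \<in> T" and th: "(h, (if xi then Va else Vb)) \<in> T"
    using taT tbT l_def h_def Vl_def by auto
  have Vl_h: "h \<notin> Vl" using disj raV rbV Vl_def h_def by auto
  show "Inv v (i - 1) (merge_step (a, b, xi) (ts, E))"
    unfolding Inv_def
  proof (intro conjI)
    show "length (fst (merge_step (a, b, xi) (ts, E))) = i - 1"
      using ms len_others ai by simp
    show "distinct (fst (merge_step (a, b, xi) (ts, E)))"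
      using ms new_notin dist others_def by (simp add: distinct_insort set_insort_key)
    show "finite (snd (merge_step (a, b, xi) (ts, E)))" using E' fE by simp
    show "\<forall>t\<in>set (fst (merge_step (a, b, xi) (ts, E))). fst t \<in> snd t"
      using setT' roots hV new_def by auto
    show "\<forall>t1\<in>set (fst (merge_step (a, b, xi) (ts, E))). \<forall>t2\<in>set (fst (merge_step (a, b, xi) (ts, E))).
        t1 \<noteq> t2 \<longrightarrow> snd t1 \<inter> snd t2 = {}"
      unfolding setT'
    proof (intro ballI impI)
      fix t1 t2 assume t1: "t1 \<in> insert new (T - {(ra, Va), (rb, Vb)})"
        and t2: "t2 \<in> insert new (T - {(ra, Va), (rb, Vb)})" and ne: "t1 \<noteq> t2"
      show "snd t1 \<inter> snd t2 = {}"
      proof (cases "t1 = new")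
        case True
        then have "t2 \<in> set others" using t2 ne set_others by auto
        then have "snd t2 \<inter> (Va \<union> Vb) = {}" by (rule other_disj)
        then show ?thesis using True new_def by auto
      next
        case False
        note F1 = False
        show ?thesis
        proof (cases "t2 = new")
          case True
          then have "t1 \<in> set others" using t1 F1 set_others by auto
          then have "snd t1 \<inter> (Va \<union> Vb) = {}" by (rule other_disj)
          then show ?thesis using True new_def by auto
        next
          case False
          then show ?thesis using F1 t1 t2 ne disjT by auto
        qed
      qed
    qed
    show "\<exists>t\<in>set (fst (merge_step (a, b, xi) (ts, E))). v \<in> snd t"
      using vin unfolding setT' new_def by (cases "v \<in> Va \<union> Vb") force+
    show "\<forall>e\<in>snd (merge_step (a, b, xi) (ts, E)). \<exists>t\<in>set (fst (merge_step (a, b, xi) (ts, E))).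
        fst e \<in> snd t \<and> snd e \<in> snd t \<and> fst e \<noteq> fst t"
    proof
      fix e assume "e \<in> snd (merge_step (a, b, xi) (ts, E))"
      then have "e = (l, h) \<or> e \<in> E" using E' by auto
      then show "\<exists>t\<in>set (fst (merge_step (a, b, xi) (ts, E))). fst e \<in> snd t \<and> snd e \<in> snd t \<and> fst e \<noteq> fst t"
      proof
        assume "e = (l, h)"
        then show ?thesis using setT' new_def hV lV hl by auto
      next
        assume "e \<in> E"
        then obtain t where t: "t \<in> T" "fst e \<in> snd t" "snd e \<in> snd t" "fst e \<noteq> fst t"
          using edges by blast
        show ?thesis
        proof (cases "t = (ra, Va) \<or> t = (rb, Vb)")
          case True
          have "fst e \<noteq> h"
          proof
            assume "fst e = h"
            then show False using True t disj raV rbV h_def by (auto split: if_splits)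
          qed
          then show ?thesis using True t setT' new_def by auto
        next
          case False
          then show ?thesis using t setT' by auto
        qed
      qed
    qed
    show "\<forall>t\<in>set (fst (merge_step (a, b, xi) (ts, E))). \<forall>x\<in>snd t. (x, fst t) \<in> (snd (merge_step (a, b, xi) (ts, E)))\<^sup>*"
    proof (intro ballI)
      fix t x assume t: "t \<in> set (fst (merge_step (a, b, xi) (ts, E)))" and x: "x \<in> snd t"
      show "(x, fst t) \<in> (snd (merge_step (a, b, xi) (ts, E)))\<^sup>*"
      proof (cases "t = new")
        case True
        have lh: "(l, h) \<in> (insert (l, h) E)\<^sup>*" by auto
        have "(x, l) \<in> (insert (l, h) E)\<^sup>* \<or> (x, h) \<in> (insert (l, h) E)\<^sup>*"
          using x True new_def reach[OF taT] reach[OF tbT] Esub l_def h_def by (auto split: if_splits)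
        then have "(x, h) \<in> (insert (l, h) E)\<^sup>*" using lh by (meson rtrancl_trans)
        then show ?thesis using True new_def E' by simp
      next
        case False
        then have "t \<in> T" using t setT' by auto
        then have "(x, fst t) \<in> E\<^sup>*" using reach x by blast
        then show ?thesis using Esub E' by auto
      qed
    qed
  qed
  show "dc v (merge_step (a, b, xi) (ts, E)) = dc v (ts, E) + (if h = v then 1 else 0)"
  proof -
    have l_notin: "l \<notin> {u. (u, v) \<in> E}" using root_no_out[OF inv] tl T_def by fastforce
    have fin: "finite {u. (u, v) \<in> E}"
      by (rule finite_subset[of _ "fst ` E"]) (use fE in force)+
    have "{u. (u, v) \<in> insert (l, h) E} = (if h = v then insert l {u. (u, v) \<in> E} else {u. (u, v) \<in> E})"
      by auto
    then show ?thesis unfolding dc_def E' using l_notin fin by simp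
  qed
  show "hc v (merge_step (a, b, xi) (ts, E)) = hc v (ts, E) + (if v \<in> Vl then 1 else 0)"
  proof -
    have sub: "{u. (v, u) \<in> E\<^sup>+} \<subseteq> snd ` (E\<^sup>+)" by force
    have fin: "finite {u. (v, u) \<in> E\<^sup>+}"
      by (rule finite_subset[OF sub]) (simp add: fE)
    have tl': "(l, Vl) \<in> set ts" using tl T_def by simp
    have th': "(h, (if xi then Va else Vb)) \<in> set ts" using th T_def by simp
    have hstar: "\<And>u. (h, u) \<in> E\<^sup>* \<longleftrightarrow> u = h"
    proof
      fix u assume "(h, u) \<in> E\<^sup>*"
      then show "u = h" using root_rtrancl[OF inv th'] by simp
    qed simp
    have vl: "(v, l) \<in> E\<^sup>* \<longleftrightarrow> v \<in> Vl"
    proof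
      assume vl: "(v, l) \<in> E\<^sup>*"
      obtain tv where tv: "tv \<in> set ts" "v \<in> snd tv" using vin T_def by blast
      have "l \<in> snd tv" using stay_tree[OF inv tv(1) vl tv(2)] .
      moreover have "l \<in> snd (l, Vl)" using roots[OF tl] by simp
      ultimately have "tv = (l, Vl)" using tree_unique[OF inv tv(1) tl'] by blast
      then show "v \<in> Vl" using tv by simp
    next
      assume "v \<in> Vl" then show "(v, l) \<in> E\<^sup>*" using reach[OF tl] by simp
    qed
    have eq: "{u. (v, u) \<in> (insert (l, h) E)\<^sup>+} = (if v \<in> Vl then insert h {u. (v, u) \<in> E\<^sup>+} else {u. (v, u) \<in> E\<^sup>+})"
      unfolding trancl_insert by (auto simp: hstar vl)
    have notin: "h \<notin> {u. (v, u) \<in> E\<^sup>+}" if "v \<in> Vl"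
    proof
      assume "h \<in> {u. (v, u) \<in> E\<^sup>+}"
      then have "(v, h) \<in> E\<^sup>*" by (simp add: trancl_into_rtrancl)
      from stay_tree[OF inv tl' this] that have "h \<in> Vl" by simp
      then show False using Vl_h by simp
    qed
    show ?thesis unfolding hc_def E' eq using fin notin by simp
  qed
  show "isr v (merge_step (a, b, xi) (ts, E)) \<longleftrightarrow> h = v \<or> (isr v (ts, E) \<and> v \<notin> Va \<union> Vb)"
  proof
    assume "isr v (merge_step (a, b, xi) (ts, E))"
    then obtain V where V: "(v, V) \<in> insert new (T - {(ra, Va), (rb, Vb)})" using setT' isr_def by auto
    show "h = v \<or> (isr v (ts, E) \<and> v \<notin> Va \<union> Vb)"
    proof (cases "(v, V) = new")
      case True then show ?thesis using new_def by simp
    next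
      case False
      then have "(v, V) \<in> set others" using V set_others by auto
      then have "v \<notin> Va \<union> Vb" using other_disj roots set_others by fastforce
      then show ?thesis using V False isr_def T_def by auto
    qed
  next
    assume "h = v \<or> (isr v (ts, E) \<and> v \<notin> Va \<union> Vb)"
    then show "isr v (merge_step (a, b, xi) (ts, E))"
    proof
      assume "h = v" then show ?thesis using setT' new_def isr_def by auto
    next
      assume "isr v (ts, E) \<and> v \<notin> Va \<union> Vb"
      then obtain V where "(v, V) \<in> T" "v \<notin> Va \<union> Vb" using isr_def T_def by auto
      then show ?thesis using setT' isr_def raV rbV by auto
    qed
  qed
qed

lemma merge_props2:
  fixes xi :: bool
  assumes inv: "Inv v i (ts, E)" and ab: "1 \<le> a" "a < b" "b \<le> i"
    and ta: "ts ! (a - 1) = (ra, Va)" and tb: "ts ! (b - 1) = (rb, Vb)"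
  defines "win \<equiv> (if v \<in> Va then xi else \<not> xi)"
  shows "Inv v (i - 1) (merge_step (a, b, xi) (ts, E))"
    and "dc v (merge_step (a, b, xi) (ts, E)) = dc v (ts, E) + (if v \<in> Va \<union> Vb \<and> win \<and> isr v (ts, E) then 1 else 0)"
    and "hc v (merge_step (a, b, xi) (ts, E)) = hc v (ts, E) + (if v \<in> Va \<union> Vb \<and> \<not> win then 1 else 0)"
    and "isr v (merge_step (a, b, xi) (ts, E)) \<longleftrightarrow> isr v (ts, E) \<and> \<not> (v \<in> Va \<union> Vb \<and> \<not> win)"
proof -
  note mp = merge_props[OF assms(1-6), of xi]
  have len: "length ts = i" using Inv_len[OF inv] .
  have dist: "distinct ts" using Inv_dist[OF inv] .
  have ai: "a - 1 < i" "b - 1 < i" "a - 1 \<noteq> b - 1" using ab by auto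
  have "ts ! (a - 1) \<in> set ts" "ts ! (b - 1) \<in> set ts" using ai len by simp_all
  then have taT: "(ra, Va) \<in> set ts" and tbT: "(rb, Vb) \<in> set ts" using ta tb by simp_all
  have neq: "(ra, Va) \<noteq> (rb, Vb)"
    using ta tb ai len nth_eq_iff_index_eq[OF dist, of "a - 1" "b - 1"] by auto
  have disj: "Va \<inter> Vb = {}" using Inv_disj[OF inv taT tbT neq] by simp
  have raV: "ra \<in> Va" and rbV: "rb \<in> Vb" using Inv_root[OF inv taT] Inv_root[OF inv tbT] by simp_all
  have isrA: "ra = v" if A: "isr v (ts, E)" and B: "v \<in> Va"
  proof -
    obtain V where V: "(v, V) \<in> set ts" using A isr_def by auto
    have "v \<in> V" using Inv_root[OF inv V] .
    then have "(v, V) = (ra, Va)" using tree_unique[OF inv V taT] B by simp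
    then show ?thesis by simp
  qed
  have isrB: "rb = v" if A: "isr v (ts, E)" and B: "v \<in> Vb"
  proof -
    obtain V where V: "(v, V) \<in> set ts" using A isr_def by auto
    have "v \<in> V" using Inv_root[OF inv V] .
    then have "(v, V) = (rb, Vb)" using tree_unique[OF inv V tbT] B by simp
    then show ?thesis by simp
  qed
  have hv: "((if xi then ra else rb) = v) \<longleftrightarrow> v \<in> Va \<union> Vb \<and> win \<and> isr v (ts, E)"
  proof
    assume h: "(if xi then ra else rb) = v"
    show "v \<in> Va \<union> Vb \<and> win \<and> isr v (ts, E)"
    proof (cases xi)
      case True
      then show ?thesis using h raV taT win_def isr_def by auto
    next
      case False
      then have "v \<notin> Va" using h rbV disj by auto
      then show ?thesis using h False rbV tbT win_def isr_def by auto
    qed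
  next
    assume "v \<in> Va \<union> Vb \<and> win \<and> isr v (ts, E)"
    then show "(if xi then ra else rb) = v"
      using isrA isrB disj win_def by (cases "v \<in> Va") (auto split: if_splits)
  qed
  have vl: "v \<in> (if xi then Vb else Va) \<longleftrightarrow> v \<in> Va \<union> Vb \<and> \<not> win"
    using disj win_def by auto
  show "Inv v (i - 1) (merge_step (a, b, xi) (ts, E))" using mp(1) .
  show "dc v (merge_step (a, b, xi) (ts, E)) = dc v (ts, E) + (if v \<in> Va \<union> Vb \<and> win \<and> isr v (ts, E) then 1 else 0)"
    using mp(2) hv by simp
  show "hc v (merge_step (a, b, xi) (ts, E)) = hc v (ts, E) + (if v \<in> Va \<union> Vb \<and> \<not> win then 1 else 0)"
    using mp(3) vl by simp
  show "isr v (merge_step (a, b, xi) (ts, E)) \<longleftrightarrow> isr v (ts, E) \<and> \<not> (v \<in> Va \<union> Vb \<and> \<not> win)"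
    using mp(4) hv by auto
qed

lemma init_props:
  assumes "1 \<le> v" "v \<le> n"
  shows "Inv v n (init_forest n)" "dc v (init_forest n) = 0" "hc v (init_forest n) = 0" "isr v (init_forest n)"
proof -
  show "Inv v n (init_forest n)"
    unfolding Inv_def init_forest_def using assms
    by (auto simp: distinct_map inj_on_def intro!: bexI[of _ "(v, {v})"])
  show "dc v (init_forest n) = 0" "hc v (init_forest n) = 0"
    by (simp_all add: dc_def hc_def init_forest_def)
  show "isr v (init_forest n)" unfolding isr_def init_forest_def using assms
    by (intro exI[of _ "{v}"]) auto
qed

definition good :: "nat \<Rightarrow> (nat \<Rightarrow> choice) \<Rightarrow> bool" where
  "good n w \<longleftrightarrow> (\<forall>i\<in>{2..n}. 1 \<le> fst (w i) \<and> fst (w i) < fst (snd (w i)) \<and> fst (snd (w i)) \<le> i)"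

definition win :: "(nat \<Rightarrow> choice) \<Rightarrow> nat \<Rightarrow> nat \<Rightarrow> nat \<Rightarrow> bool" where
  "win w n v i = (if v \<in> snd (fst (coal w n i) ! (fst (w i) - 1)) then snd (snd (w i)) else \<not> snd (snd (w i)))"

lemma sel_fin: "finite (sel w n v)" and sel_sub: "sel w n v \<subseteq> {2..n}"
  unfolding sel_def by auto

lemma card_step:
  fixes S :: "nat set"
  assumes "finite S" "i \<ge> 1"
  shows "card {x\<in>S. i - 1 < x \<and> P x} = card {x\<in>S. i < x \<and> P x} + (if i \<in> S \<and> P i then 1 else 0)"
proof -
  have "{x\<in>S. i - 1 < x \<and> P x} = (if i \<in> S \<and> P i then insert i {x\<in>S. i < x \<and> P x} else {x\<in>S. i < x \<and> P x})"
  proof -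
    have key: "\<And>x. i - Suc 0 < x \<longleftrightarrow> x = i \<or> i < x" using assms by auto
    show ?thesis by (auto simp: key)
  qed
  then show ?thesis using assms by simp
qed

lemma seq:
  assumes v: "1 \<le> v" "v \<le> n" and g: "good n w"
  shows "m \<le> n - 1 \<Longrightarrow> Inv v (n - m) (coal_aux w n m) \<and>
    dc v (coal_aux w n m) = card {i\<in>sel w n v. n - m < i \<and> (\<forall>j\<in>sel w n v. i \<le> j \<longrightarrow> win w n v j)} \<and>
    hc v (coal_aux w n m) = card {i\<in>sel w n v. n - m < i \<and> \<not> win w n v i} \<and>
    (isr v (coal_aux w n m) \<longleftrightarrow> (\<forall>j\<in>sel w n v. n - m < j \<longrightarrow> win w n v j))"
proof (induction m)
  case 0
  have e1: "{i\<in>sel w n v. n < i \<and> P i} = {}" for P using sel_sub by fastforce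
  show ?case using init_props[OF v] e1 sel_sub by (auto simp del: Collect_empty_eq)
next
  case (Suc m)
  define S where "S = sel w n v"
  define i where "i = n - m"
  have i2: "2 \<le> i" "i \<le> n" using Suc.prems i_def by auto
  have IH: "Inv v (n - m) (coal_aux w n m) \<and>
    dc v (coal_aux w n m) = card {i\<in>S. n - m < i \<and> (\<forall>j\<in>S. i \<le> j \<longrightarrow> win w n v j)} \<and>
    hc v (coal_aux w n m) = card {i\<in>S. n - m < i \<and> \<not> win w n v i} \<and>
    (isr v (coal_aux w n m) \<longleftrightarrow> (\<forall>j\<in>S. n - m < j \<longrightarrow> win w n v j))"
    using Suc S_def by simp
  obtain ts E where F: "coal_aux w n m = (ts, E)" by (cases "coal_aux w n m")
  obtain a b xi where wi: "w i = (a, b, xi)" by (cases "w i")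
  have "1 \<le> fst (w i) \<and> fst (w i) < fst (snd (w i)) \<and> fst (snd (w i)) \<le> i"
    using g i2 unfolding good_def by auto
  then have ab: "1 \<le> a" "a < b" "b \<le> i" using wi by simp_all
  obtain ra Va where ta: "ts ! (a - 1) = (ra, Va)" by (cases "ts ! (a - 1)")
  obtain rb Vb where tb: "ts ! (b - 1) = (rb, Vb)" by (cases "ts ! (b - 1)")
  have inv: "Inv v i (ts, E)" using IH F i_def by simp
  have cs: "coal_aux w n (Suc m) = merge_step (a, b, xi) (ts, E)"
    using F wi i_def by simp
  have ci: "coal w n i = (ts, E)" unfolding coal_def using F i_def Suc.prems by simp
  have inS: "i \<in> S \<longleftrightarrow> v \<in> Va \<union> Vb" unfolding S_def sel_def using i2 wi ci ta tb by auto
  have wn: "win w n v i = (if v \<in> Va then xi else \<not> xi)" unfolding win_def using wi ci ta by simp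
  note mp = merge_props2[OF inv ab ta tb, of xi, folded wn]
  have nm: "n - Suc m = i - 1" using i_def by simp
  have fS: "finite S" using sel_fin S_def by simp
  have i1: "i \<ge> 1" using i2 by simp
  have P1: "(\<forall>j\<in>S. i \<le> j \<longrightarrow> win w n v j) \<longleftrightarrow> win w n v i \<and> isr v (ts, E)" if "i \<in> S"
    using IH F i_def that by (auto simp: order.order_iff_strict)
  have IHd: "dc v (ts, E) = card {x\<in>S. i < x \<and> (\<forall>j\<in>S. x \<le> j \<longrightarrow> win w n v j)}"
    using IH F i_def by simp
  have IHh: "hc v (ts, E) = card {x\<in>S. i < x \<and> \<not> win w n v x}"
    using IH F i_def by simp
  have IHr: "isr v (ts, E) \<longleftrightarrow> (\<forall>j\<in>S. i < j \<longrightarrow> win w n v j)"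
    using IH F i_def by simp
  have c1: "(i \<in> S \<and> (\<forall>j\<in>S. i \<le> j \<longrightarrow> win w n v j)) = (v \<in> Va \<union> Vb \<and> win w n v i \<and> isr v (ts, E))"
    using inS P1 by blast
  have c2: "(i \<in> S \<and> \<not> win w n v i) = (v \<in> Va \<union> Vb \<and> \<not> win w n v i)"
    using inS by blast
  have key: "\<And>x. i - 1 < x \<longleftrightarrow> x = i \<or> i < x" using i1 by auto
  show ?case unfolding cs
  proof (intro conjI)
    show "Inv v (n - Suc m) (merge_step (a, b, xi) (ts, E))" using mp(1) nm by simp
    show "dc v (merge_step (a, b, xi) (ts, E)) = card {ia \<in> sel w n v. n - Suc m < ia \<and> (\<forall>j\<in>sel w n v. ia \<le> j \<longrightarrow> win w n v j)}"
      by (simp only: nm S_def[symmetric] mp(2) card_step[OF fS i1] IHd c1)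
    show "hc v (merge_step (a, b, xi) (ts, E)) = card {ia \<in> sel w n v. n - Suc m < ia \<and> \<not> win w n v ia}"
      by (simp only: nm S_def[symmetric] mp(3) card_step[OF fS i1] IHh c2)
    have "(\<forall>j\<in>S. i - 1 < j \<longrightarrow> win w n v j) \<longleftrightarrow> (\<forall>j\<in>S. i < j \<longrightarrow> win w n v j) \<and> (i \<in> S \<longrightarrow> win w n v i)"
      unfolding key by blast
    then show "isr v (merge_step (a, b, xi) (ts, E)) = (\<forall>j\<in>sel w n v. n - Suc m < j \<longrightarrow> win w n v j)"
      unfolding nm S_def[symmetric] mp(4) IHr inS by blast
  qed
qed

lemma dn_hn_DH:
  assumes v: "1 \<le> v" "v \<le> n" and g: "good n w"
  shows "dn w n v = card {i\<in>sel w n v. \<forall>j\<in>sel w n v. i \<le> j \<longrightarrow> win w n v j}"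
    and "hn w n v = card {i\<in>sel w n v. \<not> win w n v i}"
proof -
  have n1: "n - (n - 1) = 1" using v by simp
  note sq = seq[OF v g, of "n - 1", simplified n1, OF order.refl]
  have c1: "coal w n 1 = coal_aux w n (n - 1)" by (simp add: coal_def)
  have e: "{i\<in>sel w n v. 1 < i \<and> P i} = {i\<in>sel w n v. P i}" for P using sel_sub by fastforce
  show "dn w n v = card {i\<in>sel w n v. \<forall>j\<in>sel w n v. i \<le> j \<longrightarrow> win w n v j}"
    using sq unfolding dn_def c1 dc_def e by simp
  show "hn w n v = card {i\<in>sel w n v. \<not> win w n v i}"
    using sq unfolding hn_def c1 hc_def e by simp
qed

lemma nth_snd_eq:
  fixes xs ys :: "('a \<times> 'b) list"
  shows "map snd xs = map snd ys \<Longrightarrow> snd (xs ! j) = snd (ys ! j)"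
proof (induction xs arbitrary: ys j)
  case Nil then show ?case by simp
next
  case (Cons x xs)
  then obtain y ys' where "ys = y # ys'" by (cases ys) auto
  then show ?case using Cons by (cases j) auto
qed

lemma map_snd_insort: "map snd (insort_key (\<lambda>(r, V). f V) x xs) = insort_key f (snd x) (map snd xs)"
  by (induction xs) (auto simp: case_prod_beta)

lemma map_snd_sort: "map snd (sort_key (\<lambda>(r, V). f V) xs) = sort_key f (map snd xs)"
  by (induction xs) (simp_all add: map_snd_insort)

lemma merge_snd:
  assumes "map snd ts = map snd ts'"
  shows "map snd (fst (merge_step (a, b, x) (ts, E))) = map snd (fst (merge_step (a, b, x') (ts', E')))"
proof -
  obtain ra Va where ta: "ts ! (a - 1) = (ra, Va)" by (cases "ts ! (a - 1)")
  obtain rb Vb where tb: "ts ! (b - 1) = (rb, Vb)" by (cases "ts ! (b - 1)")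
  obtain ra' Va' where ta': "ts' ! (a - 1) = (ra', Va')" by (cases "ts' ! (a - 1)")
  obtain rb' Vb' where tb': "ts' ! (b - 1) = (rb', Vb')" by (cases "ts' ! (b - 1)")
  have "Va = Va'" using nth_snd_eq[OF assms, of "a - 1"] ta ta' by simp
  moreover have "Vb = Vb'" using nth_snd_eq[OF assms, of "b - 1"] tb tb' by simp
  ultimately show ?thesis
    unfolding merge_step_eq[OF ta tb] merge_step_eq[OF ta' tb'] fst_conv map_snd_sort
    by (simp add: nths_map[symmetric] assms)
qed

definition pr :: "(nat \<Rightarrow> choice) \<Rightarrow> nat \<Rightarrow> nat \<times> nat" where
  "pr w i = (fst (w i), fst (snd (w i)))"

lemma coal_pr: "pr w = pr w' \<Longrightarrow> map snd (fst (coal_aux w n m)) = map snd (fst (coal_aux w' n m))"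
proof (induction m)
  case 0 then show ?case by simp
next
  case (Suc m)
  have "fst (w (n - m)) = fst (w' (n - m))" "fst (snd (w (n - m))) = fst (snd (w' (n - m)))"
    using Suc.prems unfolding pr_def by (metis fst_conv snd_conv)+
  then obtain a b x x' where "w (n - m) = (a, b, x)" "w' (n - m) = (a, b, x')"
    by (metis prod.collapse)
  moreover obtain ts E where "coal_aux w n m = (ts, E)" by (cases "coal_aux w n m")
  moreover obtain ts' E' where "coal_aux w' n m = (ts', E')" by (cases "coal_aux w' n m")
  ultimately show ?case using Suc merge_snd by simp
qed

lemma sel_pr: "pr w = pr w' \<Longrightarrow> sel w n v = sel w' n v"
proof -
  assume p: "pr w = pr w'"
  have "\<And>i j. snd (fst (coal w n i) ! j) = snd (fst (coal w' n i) ! j)"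
    unfolding coal_def by (rule nth_snd_eq[OF coal_pr[OF p]])
  moreover have "\<And>i. fst (w i) = fst (w' i) \<and> fst (snd (w i)) = fst (snd (w' i))"
    using p unfolding pr_def by (metis fst_conv snd_conv)
  ultimately show ?thesis unfolding sel_def by (auto simp: case_prod_beta)
qed

lemma win_pr: "pr w = pr w' \<Longrightarrow> win w n v i = (snd (snd (w i)) \<noteq> (\<not> (v \<in> snd (fst (coal w' n i) ! (fst (w' i) - 1)))))"
proof -
  assume p: "pr w = pr w'"
  have "\<And>i j. snd (fst (coal w n i) ! j) = snd (fst (coal w' n i) ! j)"
    unfolding coal_def by (rule nth_snd_eq[OF coal_pr[OF p]])
  moreover have "fst (w i) = fst (w' i)"
    using p unfolding pr_def by (metis fst_conv)
  ultimately show ?thesis unfolding win_def by auto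
qed

definition P2 :: "nat \<Rightarrow> (nat \<times> nat) pmf" where
  "P2 i = pmf_of_set {(a, b). 1 \<le> a \<and> a < b \<and> b \<le> i}"
definition coin3 :: "nat \<times> nat \<Rightarrow> choice pmf" where
  "coin3 ab = map_pmf (\<lambda>x. (fst ab, snd ab, x)) (bernoulli_pmf (1/2))"

lemma X2_fin: "finite {(a, b). 1 \<le> a \<and> a < b \<and> b \<le> (i::nat)}"
  by (rule finite_subset[of _ "{1..i} \<times> {1..i}"]) auto

lemma X2_ne: "2 \<le> i \<Longrightarrow> {(a, b). 1 \<le> a \<and> a < b \<and> b \<le> (i::nat)} \<noteq> {}"
proof -
  assume "2 \<le> i"
  then have "(1, 2) \<in> {(a, b). 1 \<le> a \<and> a < b \<and> b \<le> (i::nat)}" by auto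
  then show ?thesis by blast
qed

lemma choice_decomp:
  assumes "2 \<le> i"
  shows "choice_pmf i = bind_pmf (P2 i) coin3"
proof -
  define X2 where "X2 = {(a, b). 1 \<le> a \<and> a < b \<and> b \<le> i}"
  define f where "f = (\<lambda>ab::nat \<times> nat. range (\<lambda>x::bool. (fst ab, snd ab, x)))"
  have fin: "finite X2" unfolding X2_def by (rule X2_fin)
  have ne: "X2 \<noteq> {}" using X2_ne[OF assms] unfolding X2_def .
  have U: "{(a, b, xi). 1 \<le> a \<and> a < b \<and> b \<le> i} = (\<Union>ab\<in>X2. f ab)"
    unfolding X2_def f_def by auto
  have inj: "inj (\<lambda>x::bool. (fst ab, snd ab, x))" for ab :: "nat \<times> nat" by (auto simp: inj_on_def)
  have card2: "card (f ab) = 2" for ab unfolding f_def by (simp add: card_image[OF inj])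
  have "pmf_of_set (\<Union>ab\<in>X2. f ab) = bind_pmf (pmf_of_set X2) (\<lambda>ab. pmf_of_set (f ab))"
    by (rule pmf_of_set_UN[where n=2]) (use fin ne card2 in \<open>auto simp: f_def disjoint_family_on_def\<close>)
  also have "\<dots> = bind_pmf (P2 i) coin3"
    unfolding P2_def X2_def[symmetric] coin3_def bernoulli_pmf_half_conv_pmf_of_set
    by (intro bind_pmf_cong refl) (simp add: f_def map_pmf_of_set_inj[OF inj])
  finally show ?thesis unfolding choice_pmf_def U .
qed

definition R :: "nat \<Rightarrow> (nat \<Rightarrow> nat \<times> nat) \<Rightarrow> (nat \<Rightarrow> choice) pmf" where
  "R n f = Pi_pmf {2..n} (0, 0, False) (\<lambda>i. coin3 (f i))"
definition PP :: "nat \<Rightarrow> (nat \<Rightarrow> nat \<times> nat) pmf" where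
  "PP n = Pi_pmf {2..n} (0, 0) P2"

lemma kingman_split: "kingman_pmf n = bind_pmf (PP n) (R n)"
proof -
  have "kingman_pmf n = Pi_pmf {2..n} (0, 0, False) (\<lambda>i. bind_pmf (P2 i) (\<lambda>ab. coin3 ab))"
    unfolding kingman_pmf_def by (intro Pi_pmf_cong) (auto simp: choice_decomp)
  also have "\<dots> = bind_pmf (PP n) (R n)"
    unfolding PP_def R_def by (subst Pi_pmf_bind[where d'="(0, 0)"]) simp_all
  finally show ?thesis .
qed

lemma supp:
  assumes "f \<in> set_pmf (PP n)" "w \<in> set_pmf (R n f)"
  shows "pr w = f" "good n w"
proof -
  have f0: "\<And>i. i \<in> {2..n} \<Longrightarrow> f i \<in> set_pmf (P2 i)"
    "\<And>i. i \<notin> {2..n} \<Longrightarrow> f i = (0, 0)"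
    using assms(1) unfolding PP_def set_Pi_pmf[OF finite_atLeastAtMost] PiE_dflt_def
    by auto
  have f: "\<And>i. i \<in> {2..n} \<Longrightarrow> f i \<in> {(a, b). 1 \<le> a \<and> a < b \<and> b \<le> i}"
    "\<And>i. i \<notin> {2..n} \<Longrightarrow> f i = (0, 0)"
  proof -
    fix i assume i: "i \<in> {2..n}"
    then show "f i \<in> {(a, b). 1 \<le> a \<and> a < b \<and> b \<le> i}"
      using f0(1)[OF i] X2_ne[of i] X2_fin[of i] unfolding P2_def by simp
  qed (rule f0(2))
  have w: "\<And>i. i \<in> {2..n} \<Longrightarrow> w i \<in> range (\<lambda>x. (fst (f i), snd (f i), x))"
    "\<And>i. i \<notin> {2..n} \<Longrightarrow> w i = (0, 0, False)"
    using assms(2) unfolding R_def set_Pi_pmf[OF finite_atLeastAtMost] PiE_dflt_def coin3_def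
    by auto
  show "pr w = f"
  proof
    fix i show "pr w i = f i"
      using w[of i] f[of i] unfolding pr_def by (cases "i \<in> {2..n}") auto
  qed
  show "good n w" unfolding good_def
  proof
    fix i assume i: "i \<in> {2..n}"
    then show "1 \<le> fst (w i) \<and> fst (w i) < fst (snd (w i)) \<and> fst (snd (w i)) \<le> i"
      using w(1)[OF i] f(1)[OF i] by auto
  qed
qed

definition w0 :: "(nat \<Rightarrow> nat \<times> nat) \<Rightarrow> nat \<Rightarrow> choice" where
  "w0 f i = (fst (f i), snd (f i), False)"

lemma pr_w0: "pr (w0 f) = f" unfolding pr_def w0_def by auto

definition SS :: "nat \<Rightarrow> nat \<Rightarrow> (nat \<Rightarrow> nat \<times> nat) \<Rightarrow> nat set" where
  "SS n v f = sel (w0 f) n v"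
definition tt :: "nat \<Rightarrow> nat \<Rightarrow> (nat \<Rightarrow> nat \<times> nat) \<Rightarrow> nat \<Rightarrow> bool" where
  "tt n v f i = (\<not> (v \<in> snd (fst (coal (w0 f) n i) ! (fst (f i) - 1))))"

lemma DH_dist:
  assumes v: "1 \<le> v" "v \<le> n" and f: "f \<in> set_pmf (PP n)"
  shows "map_pmf (\<lambda>w. (dn w n v, hn w n v)) (R n f) = mu (card (SS n v f))"
proof -
  define g where "g = (\<lambda>i (y::choice). snd (snd y) \<noteq> tt n v f i)"
  have "map_pmf (\<lambda>w. (dn w n v, hn w n v)) (R n f) = map_pmf (\<lambda>w. DH (SS n v f) (\<lambda>i. g i (w i))) (R n f)"
  proof (intro map_pmf_cong refl)
    fix w assume w: "w \<in> set_pmf (R n f)"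
    have p: "pr w = pr (w0 f)" using supp[OF f w] pr_w0 by simp
    have s: "sel w n v = SS n v f" unfolding SS_def by (rule sel_pr[OF p])
    have wn: "win w n v i = g i (w i)" for i
      unfolding win_pr[OF p] g_def tt_def w0_def by simp
    show "(dn w n v, hn w n v) = DH (SS n v f) (\<lambda>i. g i (w i))"
      unfolding DH_def dn_hn_DH[OF v supp(2)[OF f w]] s wn ..
  qed
  also have "\<dots> = mu (card (SS n v f))"
    unfolding R_def
  proof (rule core_A)
    show "SS n v f \<subseteq> {2..n}" unfolding SS_def by (rule sel_sub)
    fix i show "map_pmf (g i) (coin3 (f i)) = bernoulli_pmf (1 / 2)"
      by (cases "tt n v f i") (simp_all add: g_def coin3_def pmf.map_comp o_def map_Not_bern)
  qed simp
  finally show ?thesis .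
qed

lemma C_dist:
  assumes f: "f \<in> set_pmf (PP n)"
  shows "map_pmf (\<lambda>w. card (sel w n v)) (R n f) = return_pmf (card (SS n v f))"
proof -
  have "map_pmf (\<lambda>w. card (sel w n v)) (R n f) = map_pmf (\<lambda>w. card (SS n v f)) (R n f)"
  proof (intro map_pmf_cong refl)
    fix w assume w: "w \<in> set_pmf (R n f)"
    have p: "pr w = pr (w0 f)" using supp[OF f w] pr_w0 by simp
    show "card (sel w n v) = card (SS n v f)" unfolding SS_def sel_pr[OF p] ..
  qed
  then show ?thesis by (simp add: map_pmf_const)
qed

lemma K:
  assumes v: "1 \<le> v" "v \<le> n"
  shows "map_pmf (\<lambda>w. (dn w n v, hn w n v)) (kingman_pmf n)
       = bind_pmf (map_pmf (\<lambda>w. card (sel w n v)) (kingman_pmf n)) mu"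
proof -
  have "map_pmf (\<lambda>w. (dn w n v, hn w n v)) (kingman_pmf n) = bind_pmf (PP n) (\<lambda>f. mu (card (SS n v f)))"
    unfolding kingman_split map_bind_pmf by (intro bind_pmf_cong refl DH_dist[OF v])
  also have "\<dots> = bind_pmf (PP n) (\<lambda>f. bind_pmf (map_pmf (\<lambda>w. card (sel w n v)) (R n f)) mu)"
    by (intro bind_pmf_cong refl) (simp add: C_dist bind_return_pmf)
  also have "\<dots> = bind_pmf (map_pmf (\<lambda>w. card (sel w n v)) (kingman_pmf n)) mu"
    unfolding kingman_split map_bind_pmf bind_assoc_pmf ..
  finally show ?thesis .
qed

theorem lemma2p5:
  fixes n v :: nat
  assumes "1 \<le> v" and "v \<le> n"
  shows "(map_pmf (\<lambda>w. dn w n v) (kingman_pmf n)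
           = map_pmf (\<lambda>(w, g). min g (card (sel w n v)))
               (pair_pmf (kingman_pmf n) (geometric_pmf (1/2))))
    \<and> (\<forall>k l :: nat.
           measure_pmf.prob (kingman_pmf n) {w. dn w n v \<ge> k \<and> hn w n v \<le> l}
         = (1/2) ^ k *
           measure_pmf.prob
             (bind_pmf (kingman_pmf n)
                (\<lambda>w. map_pmf (\<lambda>x. (w, x)) (binomial_pmf (card (sel w n v) - k) (1/2))))
             {(w, x). x \<le> l \<and> card (sel w n v) \<ge> k})"
proof -
  define C where "C = map_pmf (\<lambda>w. card (sel w n v)) (kingman_pmf n)"
  have KK: "map_pmf (\<lambda>w. (dn w n v, hn w n v)) (kingman_pmf n) = bind_pmf C mu"
    unfolding C_def by (rule K[OF assms])
  have part1: "map_pmf (\<lambda>w. dn w n v) (kingman_pmf n)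
           = map_pmf (\<lambda>(w, g). min g (card (sel w n v)))
               (pair_pmf (kingman_pmf n) (geometric_pmf (1/2)))"
  proof -
    have "map_pmf (\<lambda>w. dn w n v) (kingman_pmf n) = map_pmf fst (map_pmf (\<lambda>w. (dn w n v, hn w n v)) (kingman_pmf n))"
      by (simp add: pmf.map_comp o_def)
    also have "\<dots> = bind_pmf C (\<lambda>c. map_pmf fst (mu c))" unfolding KK map_bind_pmf ..
    also have "\<dots> = bind_pmf C (\<lambda>c. map_pmf (\<lambda>g. min g c) (geometric_pmf (1/2)))" by (simp add: mu_fst)
    also have "\<dots> = map_pmf (\<lambda>(w, g). min g (card (sel w n v))) (pair_pmf (kingman_pmf n) (geometric_pmf (1/2)))"
      unfolding map_pair_pmf_bind C_def bind_map_pmf by simp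
    finally show ?thesis .
  qed
  have part2: "measure_pmf.prob (kingman_pmf n) {w. dn w n v \<ge> k \<and> hn w n v \<le> l}
         = (1/2) ^ k *
           measure_pmf.prob
             (bind_pmf (kingman_pmf n)
                (\<lambda>w. map_pmf (\<lambda>x. (w, x)) (binomial_pmf (card (sel w n v) - k) (1/2))))
             {(w, x). x \<le> l \<and> card (sel w n v) \<ge> k}" for k l :: nat
  proof -
    define \<psi> where "\<psi> = (\<lambda>c. if k \<le> c then measure_pmf.prob (binomial_pmf (c - k) (1/2)) {..l} else 0)"
    have "measure_pmf.prob (kingman_pmf n) {w. dn w n v \<ge> k \<and> hn w n v \<le> l}
        = measure_pmf.prob (map_pmf (\<lambda>w. (dn w n v, hn w n v)) (kingman_pmf n)) {dh. fst dh \<ge> k \<and> snd dh \<le> l}"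
      by (simp add: vimage_def)
    also have "\<dots> = measure_pmf.expectation C (\<lambda>c. measure_pmf.prob (mu c) {dh. fst dh \<ge> k \<and> snd dh \<le> l})"
      unfolding KK measure_bind_pmf' ..
    also have "\<dots> = measure_pmf.expectation C (\<lambda>c. (1/2)^k * \<psi> c)"
      unfolding mu_prob \<psi>_def ..
    also have "\<dots> = (1/2)^k * measure_pmf.expectation C \<psi>" by simp
    also have "measure_pmf.expectation C \<psi> =
           measure_pmf.prob
             (bind_pmf (kingman_pmf n)
                (\<lambda>w. map_pmf (\<lambda>x. (w, x)) (binomial_pmf (card (sel w n v) - k) (1/2))))
             {(w, x). x \<le> l \<and> card (sel w n v) \<ge> k}"
    proof -
      have "measure_pmf.prob
             (bind_pmf (kingman_pmf n)
                (\<lambda>w. map_pmf (\<lambda>x. (w, x)) (binomial_pmf (card (sel w n v) - k) (1/2))))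
             {(w, x). x \<le> l \<and> card (sel w n v) \<ge> k}
          = measure_pmf.expectation (kingman_pmf n) (\<lambda>w. measure_pmf.prob
               (map_pmf (\<lambda>x. (w, x)) (binomial_pmf (card (sel w n v) - k) (1/2)))
               {(w, x). x \<le> l \<and> card (sel w n v) \<ge> k})"
        by (rule measure_bind_pmf')
      also have "\<dots> = measure_pmf.expectation (kingman_pmf n) (\<lambda>w. \<psi> (card (sel w n v)))"
      proof (intro Bochner_Integration.integral_cong refl)
        fix w
        have "Pair w -` {(w, x). x \<le> l \<and> card (sel w n v) \<ge> k} = (if k \<le> card (sel w n v) then {..l} else {})"
          by auto
        then show "measure_pmf.prob (map_pmf (\<lambda>x. (w, x)) (binomial_pmf (card (sel w n v) - k) (1/2)))
               {(w, x). x \<le> l \<and> card (sel w n v) \<ge> k} = \<psi> (card (sel w n v))"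
          unfolding \<psi>_def by simp
      qed
      also have "\<dots> = measure_pmf.expectation C \<psi>" unfolding C_def by simp
      finally show ?thesis by simp
    qed
    finally show ?thesis .
  qed
  show ?thesis using part1 part2 by blast
qed

end
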